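(* Over pairs of integers $n,m\ge 2$ with $n,m\to\infty$, \[ \liminf_{n,m\to\infty}\frac{\gamma_{2t}(K_n\Box K_m)}{\min\{n,m\}}=\frac32\qquad\text{and}\qquad\limsup_{n,m\to\infty}\frac{\gamma_{2t}(K_n\Box K_m)}{\min\{n,m\}}=2. \] Furthermore, for every real number $\alpha$ with $\frac32\le\alpha\le 2$ there exists a sequence of pairs of integers $(n_k,m_k)$, $k=1,2,\dots$, with $n_k,m_k\ge 2$, such that \[ \lim_{k\to\infty}\frac{\gamma_{2t}(K_{n_k}\Box K_{m_k})}{\min\{n_k,m_k\}}=\alpha. \]
   Context: For a graph $G=(V,E)$, a set $S\subseteq V$ is a total $2$-dominating set if every vertex of $V$ (including those in $S$) is adjacent to at least $2$ vertices of $S$; $\gamma_{2t}(G)$ is the minimum cardinality of such a set. $G\Box H$ denotes the Cartesian product: vertex set $V(G)\times V(H)$, with $(u_1,v_1)\sim(u_2,v_2)$ iff either $u_1=u_2$ and $v_1\sim v_2$, or $v_1=v_2$ and $u_1\sim u_2$. $K_n$ is the complete graph on $n$ vertices. *)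

theory Defs
  imports "HOL-Library.Extended_Real" "HOL-Library.Liminf_Limsup"
begin

definition total_2_dominating :: "'a set \<Rightarrow> ('a \<Rightarrow> 'a \<Rightarrow> bool) \<Rightarrow> 'a set \<Rightarrow> bool" where
  "total_2_dominating V adj S \<longleftrightarrow>
     S \<subseteq> V \<and> (\<forall>v\<in>V. card {u \<in> S. adj v u} \<ge> 2)"

definition gamma_2t :: "'a set \<Rightarrow> ('a \<Rightarrow> 'a \<Rightarrow> bool) \<Rightarrow> nat" where
  "gamma_2t V adj = (LEAST k. \<exists>S. total_2_dominating V adj S \<and> card S = k)"

definition K_vert :: "nat \<Rightarrow> nat set" where
  "K_vert n = {0..<n}"

definition K_adj :: "nat \<Rightarrow> nat \<Rightarrow> bool" where
  "K_adj u v \<longleftrightarrow> u \<noteq> v"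

definition cart_adj :: "('a \<Rightarrow> 'a \<Rightarrow> bool) \<Rightarrow> ('b \<Rightarrow> 'b \<Rightarrow> bool) \<Rightarrow> 'a \<times> 'b \<Rightarrow> 'a \<times> 'b \<Rightarrow> bool" where
  "cart_adj adjG adjH x y \<longleftrightarrow>
     (fst x = fst y \<and> adjH (snd x) (snd y)) \<or> (snd x = snd y \<and> adjG (fst x) (fst y))"

definition gamma_2t_KK :: "nat \<Rightarrow> nat \<Rightarrow> nat" where
  "gamma_2t_KK n m = gamma_2t (K_vert n \<times> K_vert m) (cart_adj K_adj K_adj)"

definition ratio_KK :: "nat \<Rightarrow> nat \<Rightarrow> real" where
  "ratio_KK n m = real (gamma_2t_KK n m) / real (min n m)"

end

theory Submission
  imports Defs
begin

definition rc :: "(nat\<times>nat) set \<Rightarrow> nat \<Rightarrow> nat" where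
  "rc S i = card {x\<in>S. fst x = i}"
definition cc :: "(nat\<times>nat) set \<Rightarrow> nat \<Rightarrow> nat" where
  "cc S j = card {x\<in>S. snd x = j}"

abbreviation G where "G n m \<equiv> K_vert n \<times> K_vert m"
abbreviation A where "A \<equiv> cart_adj K_adj K_adj"

lemma nbr_eq:
  "{u\<in>S. A v u} = ({x\<in>S. fst x = fst v} - {v}) \<union> ({x\<in>S. snd x = snd v} - {v})"
  unfolding cart_adj_def K_adj_def by (auto simp: prod_eq_iff)

lemma nbr_card:
  assumes "finite S"
  shows "card {u\<in>S. A v u} = rc S (fst v) + cc S (snd v) - (if v \<in> S then 2 else 0)"
proof -
  have d: "({x\<in>S. fst x = fst v} - {v}) \<inter> ({x\<in>S. snd x = snd v} - {v}) = {}"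
    by (auto simp: prod_eq_iff)
  have "card {u\<in>S. A v u} = card ({x\<in>S. fst x = fst v} - {v}) + card ({x\<in>S. snd x = snd v} - {v})"
    unfolding nbr_eq by (rule card_Un_disjoint) (use assms d in auto)
  also have "\<dots> = rc S (fst v) + cc S (snd v) - (if v \<in> S then 2 else 0)"
  proof (cases "v \<in> S")
    case True
    have "rc S (fst v) \<ge> 1" unfolding rc_def
      using True assms by (metis (mono_tags, lifting) One_nat_def Suc_leI card_gt_0_iff empty_iff finite_subset mem_Collect_eq subsetI)
    moreover have "cc S (snd v) \<ge> 1" unfolding cc_def
      using True assms by (metis (mono_tags, lifting) One_nat_def Suc_leI card_gt_0_iff empty_iff finite_subset mem_Collect_eq subsetI)
    ultimately show ?thesis using True assms unfolding rc_def cc_def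
      by (auto simp: card_Diff_singleton)
  next
    case False
    then show ?thesis unfolding rc_def cc_def by simp
  qed
  finally show ?thesis .
qed

lemma t2d_iff:
  assumes "finite S"
  shows "total_2_dominating V A S \<longleftrightarrow> S \<subseteq> V \<and>
     (\<forall>v\<in>V. rc S (fst v) + cc S (snd v) \<ge> (if v \<in> S then 4 else 2))"
  unfolding total_2_dominating_def nbr_card[OF assms] by auto

lemma card_rows:
  assumes "S \<subseteq> G n m"
  shows "card S = (\<Sum>i<n. rc S i)"
proof -
  have f: "finite S" using finite_subset[OF assms(1)] by (simp add: K_vert_def)
  have "card S = (\<Sum>x\<in>S. 1::nat)" by simp
  also have "\<dots> = (\<Sum>i\<in>{..<n}. \<Sum>x\<in>{x\<in>S. fst x = i}. 1)"
    by (rule sum.group[symmetric]) (use f assms in \<open>auto simp: K_vert_def\<close>)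
  finally show ?thesis unfolding rc_def by simp
qed

lemma card_cols:
  assumes "S \<subseteq> G n m"
  shows "card S = (\<Sum>j<m. cc S j)"
proof -
  have f: "finite S" using finite_subset[OF assms(1)] by (simp add: K_vert_def)
  have "card S = (\<Sum>x\<in>S. 1::nat)" by simp
  also have "\<dots> = (\<Sum>i\<in>{..<m}. \<Sum>x\<in>{x\<in>S. snd x = i}. 1)"
    by (rule sum.group[symmetric]) (use f assms in \<open>auto simp: K_vert_def\<close>)
  finally show ?thesis unfolding cc_def by simp
qed

lemma sum_rows_inv:
  assumes "S \<subseteq> G n m" "\<forall>i<n. rc S i \<ge> 1"
  shows "(\<Sum>x\<in>S. 1 / real (rc S (fst x))) = n"
proof -
  have f: "finite S" using finite_subset[OF assms(1)] by (simp add: K_vert_def)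
  have "(\<Sum>x\<in>S. 1 / real (rc S (fst x))) = (\<Sum>i\<in>{..<n}. \<Sum>x\<in>{x\<in>S. fst x = i}. 1 / real (rc S (fst x)))"
    by (rule sum.group[symmetric]) (use f assms in \<open>auto simp: K_vert_def\<close>)
  also have "\<dots> = (\<Sum>i\<in>{..<n}. \<Sum>x\<in>{x\<in>S. fst x = i}. 1 / real (rc S i))"
    by (intro sum.cong) auto
  also have "\<dots> = (\<Sum>i\<in>{..<n}. 1)"
    using assms(2) by (intro sum.cong) (auto simp: rc_def)
  finally show ?thesis by simp
qed

lemma sum_cols_inv:
  assumes "S \<subseteq> G n m" "\<forall>j<m. cc S j \<ge> 1"
  shows "(\<Sum>x\<in>S. 1 / real (cc S (snd x))) = m"
proof -
  have f: "finite S" using finite_subset[OF assms(1)] by (simp add: K_vert_def)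
  have "(\<Sum>x\<in>S. 1 / real (cc S (snd x))) = (\<Sum>i\<in>{..<m}. \<Sum>x\<in>{x\<in>S. snd x = i}. 1 / real (cc S (snd x)))"
    by (rule sum.group[symmetric]) (use f assms in \<open>auto simp: K_vert_def\<close>)
  also have "\<dots> = (\<Sum>i\<in>{..<m}. \<Sum>x\<in>{x\<in>S. snd x = i}. 1 / real (cc S i))"
    by (intro sum.cong) auto
  also have "\<dots> = (\<Sum>i\<in>{..<m}. 1)"
    using assms(2) by (intro sum.cong) (auto simp: cc_def)
  finally show ?thesis by simp
qed

lemma inv_bound:
  fixes r c :: nat
  assumes "r \<ge> 1" "c \<ge> 1" "r + c \<ge> 4"
  shows "1 / real r + 1 / real c \<le> 4/3"
proof -
  consider "r = 1" | "c = 1" | "r \<ge> 2 \<and> c \<ge> 2" using assms by linarith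
  then show ?thesis
  proof cases
    case 1
    then have "c \<ge> 3" using assms by simp
    then have "1 / real c \<le> 1/3" by (simp add: field_simps)
    then show ?thesis using 1 by simp
  next
    case 2
    then have "r \<ge> 3" using assms by simp
    then have "1 / real r \<le> 1/3" by (simp add: field_simps)
    then show ?thesis using 2 by simp
  next
    case 3
    then have "1 / real r \<le> 1/2" "1 / real c \<le> 1/2" by (simp_all add: field_simps)
    then show ?thesis by simp
  qed
qed

lemma lower:
  assumes t: "total_2_dominating (G n m) A S"
  shows "2*m \<le> card S \<or> 2*n \<le> card S \<or> 3*(n+m) \<le> 4*card S"
proof -
  have sub: "S \<subseteq> G n m" using t unfolding total_2_dominating_def by simp
  have f: "finite S" using finite_subset[OF sub] by (simp add: K_vert_def)
  have cond: "\<And>v. v \<in> G n m \<Longrightarrow> rc S (fst v) + cc S (snd v) \<ge> (if v \<in> S then 4 else 2)"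
    using t unfolding t2d_iff[OF f] by blast
  have memr: "rc S i \<ge> 1" if "(i,j) \<in> S" for i j
  proof -
    have "(i,j) \<in> {x\<in>S. fst x = i}" using that by simp
    then show ?thesis unfolding rc_def using f
      by (metis (no_types, lifting) One_nat_def Suc_leI card_gt_0_iff empty_iff finite_subset mem_Collect_eq subsetI)
  qed
  have memc: "cc S j \<ge> 1" if "(i,j) \<in> S" for i j
  proof -
    have "(i,j) \<in> {x\<in>S. snd x = j}" using that by simp
    then show ?thesis unfolding cc_def using f
      by (metis (no_types, lifting) One_nat_def Suc_leI card_gt_0_iff empty_iff finite_subset mem_Collect_eq subsetI)
  qed
  show ?thesis
  proof (cases "\<exists>i<n. rc S i = 0")
    case True
    then obtain i where i: "i < n" "rc S i = 0" by blast
    have "cc S j \<ge> 2" if "j < m" for j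
    proof -
      have "(i,j) \<notin> S" using memr i by force
      then show ?thesis using cond[of "(i,j)"] i that by (auto simp: K_vert_def)
    qed
    then have "(\<Sum>j<m. 2) \<le> (\<Sum>j<m. cc S j)" by (intro sum_mono) auto
    then show ?thesis using card_cols[OF sub] by simp
  next
    case F1: False
    show ?thesis
    proof (cases "\<exists>j<m. cc S j = 0")
      case True
      then obtain j where j: "j < m" "cc S j = 0" by blast
      have "rc S i \<ge> 2" if "i < n" for i
      proof -
        have "(i,j) \<notin> S" using memc j by force
        then show ?thesis using cond[of "(i,j)"] j that by (auto simp: K_vert_def)
      qed
      then have "(\<Sum>j<n. 2) \<le> (\<Sum>j<n. rc S j)" by (intro sum_mono) auto
      then show ?thesis using card_rows[OF sub] by simp
    next
      case False
      have r1: "\<forall>i<n. rc S i \<ge> 1" using F1 by (simp add: Suc_le_eq)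
      have c1: "\<forall>j<m. cc S j \<ge> 1" using False by (simp add: Suc_le_eq)
      have "real n + real m = (\<Sum>x\<in>S. 1 / real (rc S (fst x)) + 1 / real (cc S (snd x)))"
        using sum_rows_inv[OF sub r1] sum_cols_inv[OF sub c1] by (simp add: sum.distrib)
      also have "\<dots> \<le> (\<Sum>x\<in>S. 4/3)"
      proof (rule sum_mono)
        fix x assume x: "x \<in> S"
        then have "x \<in> G n m" using sub by blast
        then have "rc S (fst x) + cc S (snd x) \<ge> 4" using cond x by fastforce
        moreover have "rc S (fst x) \<ge> 1" "cc S (snd x) \<ge> 1"
          using memr[of "fst x" "snd x"] memc[of "fst x" "snd x"] x by auto
        ultimately show "1 / real (rc S (fst x)) + 1 / real (cc S (snd x)) \<le> 4/3"
          using inv_bound by blast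
      qed
      also have "\<dots> = 4/3 * real (card S)" by simp
      finally have "3 * (real n + real m) \<le> 4 * real (card S)" by simp
      then have "real (3*(n+m)) \<le> real (4 * card S)" by simp
      then show ?thesis by linarith
    qed
  qed
qed

lemma rc_pos: assumes "finite S" "(i,j) \<in> S" shows "rc S i \<ge> 1"
proof -
  have "(i,j) \<in> {x\<in>S. fst x = i}" "finite {x\<in>S. fst x = i}" using assms by auto
  then have "card {x\<in>S. fst x = i} \<noteq> 0" by (metis card_0_eq empty_iff)
  then show ?thesis unfolding rc_def by simp
qed

lemma cc_pos: assumes "finite S" "(i,j) \<in> S" shows "cc S j \<ge> 1"
proof -
  have "(i,j) \<in> {x\<in>S. snd x = j}" "finite {x\<in>S. snd x = j}" using assms by auto
  then have "card {x\<in>S. snd x = j} \<noteq> 0" by (metis card_0_eq empty_iff)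
  then show ?thesis unfolding cc_def by simp
qed

lemma gamma_le: "total_2_dominating (G n m) A S \<Longrightarrow> gamma_2t_KK n m \<le> card S"
  unfolding gamma_2t_KK_def gamma_2t_def by (rule Least_le) blast

lemma gamma_ex: "total_2_dominating (G n m) A S \<Longrightarrow>
   \<exists>T. total_2_dominating (G n m) A T \<and> card T = gamma_2t_KK n m"
  unfolding gamma_2t_KK_def gamma_2t_def by (rule LeastI_ex) blast

lemma constr1:
  assumes "n \<ge> 2" "m \<ge> 2"
  shows "total_2_dominating (G n m) A ({0..<n} \<times> {0,1})"
proof -
  let ?S = "{0..<n} \<times> {0::nat,1}"
  have f: "finite ?S" by simp
  have r: "rc ?S i = 2" if "i < n" for i
  proof -
    have "{x\<in>?S. fst x = i} = {(i,0),(i,1)}" using that by auto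
    then show ?thesis unfolding rc_def by simp
  qed
  have c: "cc ?S j = n" if "j \<in> {0,1}" for j
  proof -
    have "{x\<in>?S. snd x = j} = {0..<n} \<times> {j}" using that by auto
    then show ?thesis unfolding cc_def by (simp add: card_cartesian_product)
  qed
  show ?thesis unfolding t2d_iff[OF f]
  proof (intro conjI ballI)
    show "?S \<subseteq> G n m" using assms by (auto simp: K_vert_def)
  next
    fix v assume v: "v \<in> G n m"
    then have "rc ?S (fst v) = 2" using r by (auto simp: K_vert_def)
    moreover have "v \<in> ?S \<Longrightarrow> cc ?S (snd v) = n" using c by auto
    ultimately show "(if v \<in> ?S then 4 else 2) \<le> rc ?S (fst v) + cc ?S (snd v)"
      using assms by auto
  qed
qed

lemma constr2:
  assumes "n \<ge> 2" "m \<ge> 2"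
  shows "total_2_dominating (G n m) A ({0,1} \<times> {0..<m})"
proof -
  let ?S = "{0::nat,1} \<times> {0..<m}"
  have f: "finite ?S" by simp
  have r: "cc ?S i = 2" if "i < m" for i
  proof -
    have "{x\<in>?S. snd x = i} = {(0,i),(1,i)}" using that by auto
    then show ?thesis unfolding cc_def by simp
  qed
  have c: "rc ?S j = m" if "j \<in> {0,1}" for j
  proof -
    have "{x\<in>?S. fst x = j} = {j} \<times> {0..<m}" using that by auto
    then show ?thesis unfolding rc_def by (simp add: card_cartesian_product)
  qed
  show ?thesis unfolding t2d_iff[OF f]
  proof (intro conjI ballI)
    show "?S \<subseteq> G n m" using assms by (auto simp: K_vert_def)
  next
    fix v assume v: "v \<in> G n m"
    then have "cc ?S (snd v) = 2" using r by (auto simp: K_vert_def)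
    moreover have "v \<in> ?S \<Longrightarrow> rc ?S (fst v) = m" using c by auto
    ultimately show "(if v \<in> ?S then 4 else 2) \<le> rc ?S (fst v) + cc ?S (snd v)"
      using assms by auto
  qed
qed

lemma gamma_upper:
  assumes "n \<ge> 2" "m \<ge> 2"
  shows "gamma_2t_KK n m \<le> 2*n" "gamma_2t_KK n m \<le> 2*m"
proof -
  have "card ({0..<n} \<times> {0::nat,1}) = 2*n" by (simp add: card_cartesian_product)
  then show "gamma_2t_KK n m \<le> 2*n" using gamma_le[OF constr1[OF assms]] by simp
  have "card ({0::nat,1} \<times> {0..<m}) = 2*m" by (simp add: card_cartesian_product)
  then show "gamma_2t_KK n m \<le> 2*m" using gamma_le[OF constr2[OF assms]] by simp
qed

lemma gamma_lower:
  assumes "n \<ge> 2" "m \<ge> 2"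
  shows "2*m \<le> gamma_2t_KK n m \<or> 2*n \<le> gamma_2t_KK n m \<or> 3*(n+m) \<le> 4*gamma_2t_KK n m"
proof -
  obtain T where "total_2_dominating (G n m) A T" "card T = gamma_2t_KK n m"
    using gamma_ex[OF constr1[OF assms]] by blast
  then show ?thesis using lower by metis
qed

lemma constr3:
  assumes "a \<ge> 1" "b \<ge> 1"
  defines "S \<equiv> (\<lambda>j. (j div 3, j)) ` {..<3*a} \<union> (\<lambda>i. (i, 3*a + (i-a) div 3)) ` {a..<a+3*b}"
  shows "total_2_dominating (G (a+3*b) (3*a+b)) A S" "card S \<le> 3*(a+b)"
proof -
  have f: "finite S" unfolding S_def by simp
  have "card S \<le> card ((\<lambda>j. (j div 3, j)) ` {..<3*a}) + card ((\<lambda>i. (i, 3*a + (i-a) div 3)) ` {a..<a+3*b})"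
    unfolding S_def by (rule card_Un_le)
  also have "\<dots> \<le> card {..<3*a} + card {a..<a+3*b}"
    by (intro add_mono card_image_le) auto
  finally show "card S \<le> 3*(a+b)" by simp
  have sub: "S \<subseteq> G (a+3*b) (3*a+b)"
  proof
    fix x assume "x \<in> S"
    then show "x \<in> G (a+3*b) (3*a+b)" unfolding S_def K_vert_def
    proof
      assume "x \<in> (\<lambda>j. (j div 3, j)) ` {..<3*a}"
      then show "x \<in> {0..<a+3*b} \<times> {0..<3*a+b}" by auto
    next
      assume "x \<in> (\<lambda>i. (i, 3*a + (i-a) div 3)) ` {a..<a+3*b}"
      then obtain i where i: "a \<le> i" "i < a+3*b" "x = (i, 3*a + (i-a) div 3)" by auto
      then have "(i-a) div 3 < b" by linarith
      then show "x \<in> {0..<a+3*b} \<times> {0..<3*a+b}" using i by auto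
    qed
  qed
  have R1: "rc S i \<ge> 1" if "i < a+3*b" for i
  proof (cases "i < a")
    case True
    then have "(i, 3*i) \<in> S" unfolding S_def by (auto intro!: image_eqI[where x="3*i"])
    then show ?thesis using rc_pos f by blast
  next
    case False
    then have "(i, 3*a + (i-a) div 3) \<in> S" unfolding S_def using that by auto
    then show ?thesis using rc_pos f by blast
  qed
  have C1: "cc S j \<ge> 1" if "j < 3*a+b" for j
  proof (cases "j < 3*a")
    case True
    then have "(j div 3, j) \<in> S" unfolding S_def by auto
    then show ?thesis using cc_pos f by blast
  next
    case False
    define i where "i = a + 3*(j - 3*a)"
    have "i \<in> {a..<a+3*b}" using that False unfolding i_def by auto
    moreover have "j = 3*a + (i-a) div 3" using False unfolding i_def by auto
    ultimately have "(i, j) \<in> S" unfolding S_def by blast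
    then show ?thesis using cc_pos f by blast
  qed
  have R3: "rc S (j div 3) \<ge> 3" if "j < 3*a" for j
  proof -
    let ?i = "j div 3"
    have "{(?i, 3*?i), (?i, 3*?i+1), (?i, 3*?i+2)} \<subseteq> {x\<in>S. fst x = ?i}"
    proof -
      have "(?i, 3*?i+t) \<in> S" if "t < 3" for t
      proof -
        have "?i < a" using \<open>j < 3*a\<close> by linarith
        then have "3*?i+t \<in> {..<3*a}" using that by auto
        moreover have "(3*?i+t) div 3 = ?i" using that by simp
        ultimately show ?thesis unfolding S_def
          by (metis (no_types, lifting) UnI1 image_eqI)
      qed
      from this[of 0] this[of 1] this[of 2] show ?thesis by simp
    qed
    from card_mono[OF _ this] f show ?thesis unfolding rc_def by simp
  qed
  have C3: "cc S (3*a + (i-a) div 3) \<ge> 3" if "a \<le> i" "i < a+3*b" for i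
  proof -
    let ?k = "(i-a) div 3"
    let ?j = "3*a + ?k"
    have k: "?k < b" using that by linarith
    have "{(a+3*?k, ?j), (a+3*?k+1, ?j), (a+3*?k+2, ?j)} \<subseteq> {x\<in>S. snd x = ?j}"
    proof -
      have "(a+3*?k+t, ?j) \<in> S" if "t < 3" for t
      proof -
        have "(a+3*?k+t - a) div 3 = ?k" using that by simp
        moreover have "a+3*?k+t \<in> {a..<a+3*b}" using k that by auto
        ultimately show ?thesis unfolding S_def
          by (auto intro!: image_eqI[where x="a+3*?k+t"])
      qed
      from this[of 0] this[of 1] this[of 2] show ?thesis by simp
    qed
    from card_mono[OF _ this] f show ?thesis unfolding cc_def by simp
  qed
  show "total_2_dominating (G (a+3*b) (3*a+b)) A S" unfolding t2d_iff[OF f]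
  proof (intro conjI ballI)
    show "S \<subseteq> G (a+3*b) (3*a+b)" by (rule sub)
  next
    fix v assume v: "v \<in> G (a+3*b) (3*a+b)"
    obtain i j where ij: "v = (i,j)" by fastforce
    have il: "i < a+3*b" and jl: "j < 3*a+b" using v ij by (auto simp: K_vert_def)
    show "(if v \<in> S then 4 else 2) \<le> rc S (fst v) + cc S (snd v)"
    proof (cases "v \<in> S")
      case False
      then show ?thesis using R1[OF il] C1[OF jl] ij by simp
    next
      case True
      then have "v \<in> (\<lambda>j. (j div 3, j)) ` {..<3*a} \<or> v \<in> (\<lambda>i. (i, 3*a + (i-a) div 3)) ` {a..<a+3*b}"
        unfolding S_def by blast
      then show ?thesis
      proof
        assume "v \<in> (\<lambda>j. (j div 3, j)) ` {..<3*a}"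
        then obtain j' where "j' < 3*a" "v = (j' div 3, j')" by auto
        then show ?thesis using R3[of j'] C1[of j'] True by simp
      next
        assume "v \<in> (\<lambda>i. (i, 3*a + (i-a) div 3)) ` {a..<a+3*b}"
        then obtain i' where i': "a \<le> i'" "i' < a+3*b" "v = (i', 3*a + (i'-a) div 3)" by auto
        then show ?thesis using C3[OF i'(1,2)] R1[of i'] True by simp
      qed
    qed
  qed
qed



lemma ratio_bounds:
  assumes "n \<ge> 2" "m \<ge> 2"
  shows "3/2 \<le> ratio_KK n m" "ratio_KK n m \<le> 2"
proof -
  let ?g = "gamma_2t_KK n m"
  have mp: "real (min n m) > 0" using assms by simp
  have u: "?g \<le> 2 * min n m" using gamma_upper[OF assms] by (simp add: min_def)
  have l: "3 * min n m \<le> 2 * ?g" using gamma_lower[OF assms] by (auto simp: min_def)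
  have "3/2 * real (min n m) \<le> real ?g" using l by linarith
  then show "3/2 \<le> ratio_KK n m" unfolding ratio_KK_def using mp by (simp add: field_simps)
  have "real ?g \<le> 2 * real (min n m)" using u by linarith
  then show "ratio_KK n m \<le> 2" unfolding ratio_KK_def using mp by (simp add: field_simps)
qed

lemma ratio_two:
  assumes "n \<ge> 2"
  shows "ratio_KK n (2*n) = 2"
proof -
  let ?g = "gamma_2t_KK n (2*n)"
  have "?g \<le> 2*n" using gamma_upper assms by auto
  moreover have "2*n \<le> ?g" using gamma_lower[of n "2*n"] assms by auto
  ultimately have "?g = 2*n" by simp
  then show ?thesis unfolding ratio_KK_def using assms by simp
qed

lemma ratio_ab:
  assumes "1 \<le> b" "b \<le> a" "a \<le> 3*b"
  shows "ratio_KK (a+3*b) (3*a+b) = 3*(real a + real b) / (real a + 3*real b)"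
proof -
  let ?g = "gamma_2t_KK (a+3*b) (3*a+b)"
  have "?g \<le> 3*(a+b)" using constr3[of a b] assms gamma_le order.trans by fastforce
  moreover have "3*(a+b) \<le> ?g" using gamma_lower[of "a+3*b" "3*a+b"] assms by auto
  ultimately have "?g = 3*(a+b)" by simp
  moreover have "min (a+3*b) (3*a+b) = a+3*b" using assms by simp
  ultimately show ?thesis unfolding ratio_KK_def by simp
qed



lemma seq_part:
  fixes \<alpha> :: real
  assumes "3/2 \<le> \<alpha>" "\<alpha> \<le> 2"
  shows "\<exists>nk mk :: nat \<Rightarrow> nat. (\<forall>k. nk k \<ge> 2 \<and> mk k \<ge> 2) \<and>
             (\<lambda>k. ratio_KK (nk k) (mk k)) \<longlonglongrightarrow> \<alpha>"
proof -
  define t where "t = (3*\<alpha>-3)/(3-\<alpha>)"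
  have t1: "1 \<le> t" "t \<le> 3" using assms unfolding t_def by (simp_all add: field_simps)
  define b :: "nat \<Rightarrow> nat" where "b k = Suc k" for k
  define a :: "nat \<Rightarrow> nat" where "a k = nat \<lfloor>t * real (Suc k)\<rfloor>" for k
  have fl1: "real (Suc k) \<le> t * real (Suc k)" for k using t1 by simp
  have fl2: "t * real (Suc k) \<le> 3 * real (Suc k)" for k by (rule mult_right_mono) (use t1 in auto)
  have ab: "b k \<le> a k \<and> a k \<le> 3 * b k" for k
  proof -
    have "int (Suc k) \<le> \<lfloor>t * real (Suc k)\<rfloor>" using fl1[of k] by (simp add: le_floor_iff)
    moreover have "\<lfloor>t * real (Suc k)\<rfloor> \<le> int (3 * Suc k)" using fl2[of k] by (simp add: floor_le_iff)
    ultimately show ?thesis unfolding a_def b_def by linarith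
  qed
  have ar: "t - 1 / real (Suc k) \<le> real (a k) / real (b k) \<and> real (a k) / real (b k) \<le> t" for k
  proof -
    have pos: "0 \<le> \<lfloor>t * real (Suc k)\<rfloor>" using fl1[of k] by (simp add: le_floor_iff)
    have r: "real (a k) = of_int \<lfloor>t * real (Suc k)\<rfloor>" unfolding a_def using pos by simp
    have "t * real (Suc k) - 1 \<le> real (a k)" "real (a k) \<le> t * real (Suc k)"
      unfolding r by linarith+
    moreover have sp: "real (Suc k) > 0" by simp
    ultimately have "(t * real (Suc k) - 1) / real (Suc k) \<le> real (a k) / real (Suc k)"
      "real (a k) / real (Suc k) \<le> t * real (Suc k) / real (Suc k)"
      by (intro divide_right_mono; simp)+
    moreover have "(t * real (Suc k) - 1) / real (Suc k) = t - 1 / real (Suc k)"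
      "t * real (Suc k) / real (Suc k) = t" using sp by (simp_all add: field_simps)
    ultimately show ?thesis unfolding b_def by simp
  qed
  define x where "x k = real (a k) / real (b k)" for k
  have xt: "x \<longlonglongrightarrow> t"
  proof (rule tendsto_sandwich[of "\<lambda>k. t - 1 / real (Suc k)" _ _ "\<lambda>k. t"])
    show "\<forall>\<^sub>F k in sequentially. t - 1 / real (Suc k) \<le> x k" using ar unfolding x_def by simp
    show "\<forall>\<^sub>F k in sequentially. x k \<le> t" using ar unfolding x_def by simp
    show "(\<lambda>k. t) \<longlonglongrightarrow> t" by simp
    have "(\<lambda>k. 1 / real (Suc k)) \<longlonglongrightarrow> 0"
      using LIMSEQ_inverse_real_of_nat by (simp add: inverse_eq_divide)
    then show "(\<lambda>k. t - 1 / real (Suc k)) \<longlonglongrightarrow> t"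
      using tendsto_diff[of "\<lambda>k. t" t sequentially "\<lambda>k. 1 / real (Suc k)" 0] by simp
  qed
  have lim: "(\<lambda>k. 3 * (x k + 1) / (x k + 3)) \<longlonglongrightarrow> 3 * (t + 1) / (t + 3)"
    using t1 by (intro tendsto_intros xt) auto
  have val: "3 * (t + 1) / (t + 3) = \<alpha>"
    using assms unfolding t_def by (simp add: field_simps)
  have eq: "ratio_KK (a k + 3 * b k) (3 * a k + b k) = 3 * (x k + 1) / (x k + 3)" for k
  proof -
    have bp: "real (b k) > 0" unfolding b_def by simp
    have "ratio_KK (a k + 3 * b k) (3 * a k + b k) = 3*(real (a k) + real (b k)) / (real (a k) + 3*real (b k))"
      using ab[of k] by (intro ratio_ab) (auto simp: b_def)
    also have "\<dots> = 3 * (x k + 1) / (x k + 3)"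
    proof -
      have e1: "x k + 1 = (real (a k) + real (b k)) / real (b k)"
        "x k + 3 = (real (a k) + 3 * real (b k)) / real (b k)"
        unfolding x_def using bp by (simp_all add: field_simps)
      show ?thesis unfolding e1 using bp by simp
    qed
    finally show ?thesis .
  qed
  show ?thesis
  proof (intro exI conjI allI)
    fix k
    show "a k + 3 * b k \<ge> 2" "3 * a k + b k \<ge> 2" using ab[of k] by (auto simp: b_def)
  next
    show "(\<lambda>k. ratio_KK (a k + 3 * b k) (3 * a k + b k)) \<longlonglongrightarrow> \<alpha>"
      unfolding eq using lim val by simp
  qed
qed

lemma lo_pt: "n \<ge> 2 \<Longrightarrow> m \<ge> 2 \<Longrightarrow> ereal (3/2) \<le> ereal (ratio_KK n m)"
  using ratio_bounds(1) by simp
lemma hi_pt: "n \<ge> 2 \<Longrightarrow> m \<ge> 2 \<Longrightarrow> ereal (ratio_KK n m) \<le> ereal 2"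
  using ratio_bounds(2) by simp

lemma ev2: "\<forall>\<^sub>F p in at_top \<times>\<^sub>F at_top. (case p of (n, m) \<Rightarrow> n \<ge> (2::nat) \<and> m \<ge> (2::nat))"
  unfolding eventually_prod_sequentially by auto

theorem theorem18:
  shows "Liminf (at_top \<times>\<^sub>F at_top) (\<lambda>(n, m). ereal (ratio_KK n m)) = ereal (3/2) \<and>
         Limsup (at_top \<times>\<^sub>F at_top) (\<lambda>(n, m). ereal (ratio_KK n m)) = ereal 2 \<and>
         (\<forall>\<alpha>::real. 3/2 \<le> \<alpha> \<and> \<alpha> \<le> 2 \<longrightarrow>
           (\<exists>nk mk :: nat \<Rightarrow> nat. (\<forall>k. nk k \<ge> 2 \<and> mk k \<ge> 2) \<and>
             (\<lambda>k. ratio_KK (nk k) (mk k)) \<longlonglongrightarrow> \<alpha>))"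
proof (intro conjI allI impI)
  let ?F = "at_top \<times>\<^sub>F at_top :: (nat \<times> nat) filter"
  let ?f = "\<lambda>(n, m). ereal (ratio_KK n m)"
  show "\<exists>nk mk :: nat \<Rightarrow> nat. (\<forall>k. nk k \<ge> 2 \<and> mk k \<ge> 2) \<and>
             (\<lambda>k. ratio_KK (nk k) (mk k)) \<longlonglongrightarrow> \<alpha>" if "3/2 \<le> \<alpha> \<and> \<alpha> \<le> 2" for \<alpha>
    using seq_part that by blast
  have lo: "\<forall>\<^sub>F p in ?F. ereal (3/2) \<le> ?f p"
    using ev2 by eventually_elim (auto intro: lo_pt)
  have hi: "\<forall>\<^sub>F p in ?F. ?f p \<le> ereal 2"
    using ev2 by eventually_elim (auto intro: hi_pt)
  show "Liminf ?F ?f = ereal (3/2)"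
  proof (rule antisym)
    show "ereal (3/2) \<le> Liminf ?F ?f" by (rule Liminf_bounded[OF lo])
    show "Liminf ?F ?f \<le> ereal (3/2)"
    proof (rule ccontr)
      assume "\<not> ?thesis"
      then have "ereal (3/2) < Liminf ?F ?f" by simp
      then have "\<forall>\<^sub>F p in ?F. ereal (3/2) < ?f p"
        using le_Liminf_iff[of "Liminf ?F ?f" ?F ?f] by blast
      then obtain N where N: "\<forall>m\<ge>N. \<forall>n\<ge>N. ereal (3/2) < ?f (n, m)"
        unfolding eventually_prod_sequentially by blast
      define k where "k = Suc N"
      have "ratio_KK (k + 3*k) (3*k + k) = 3/2"
      proof -
        have "real k > 0" unfolding k_def by simp
        then have "3*(real k + real k)/(real k + 3*real k) = 3/2" by (simp add: field_simps)
        moreover have "1 \<le> k" unfolding k_def by simp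
        ultimately show ?thesis using ratio_ab[of k k] by simp
      qed
      moreover have "ereal (3/2) < ?f (k + 3*k, 3*k + k)" using N unfolding k_def by simp
      ultimately show False by simp
    qed
  qed
  show "Limsup ?F ?f = ereal 2"
  proof (rule antisym)
    show "Limsup ?F ?f \<le> ereal 2" by (rule Limsup_bounded[OF hi])
    show "ereal 2 \<le> Limsup ?F ?f"
    proof (rule ccontr)
      assume "\<not> ?thesis"
      then have "Limsup ?F ?f < ereal 2" by simp
      then have "\<forall>\<^sub>F p in ?F. ereal 2 > ?f p"
        using Limsup_le_iff[of ?F ?f "Limsup ?F ?f"] by blast
      then obtain N where N: "\<forall>m\<ge>N. \<forall>n\<ge>N. ereal 2 > ?f (n, m)"
        unfolding eventually_prod_sequentially by blast
      define k where "k = N + 2"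
      have "ratio_KK k (2*k) = 2" using ratio_two[of k] unfolding k_def by simp
      moreover have "ereal 2 > ?f (k, 2*k)" using N unfolding k_def by simp
      ultimately show False by simp
    qed
  qed
qed


end
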